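(* Let $\mathcal P=(Q,T)$ be a replicated system and $U\subseteq T$. Then $[\![\mathrm{disa}(U)]\!]=[\![\mathrm{dead}(U)]\!]$ if and only if $$\bigwedge_{t\in T}\ \bigwedge_{u\in U}\ \bigvee_{u'\in U}\ \mathrm{pre}(t)+(\mathrm{pre}(u)\mathbin{\dot-}\mathrm{post}(t))\ \ge\ \mathrm{pre}(u'),$$ where $(\vec x\mathbin{\dot-}\vec y)(q)=\max(\vec x(q)-\vec y(q),0)$ for $\vec x,\vec y\in\mathbb N^Q$.
   Context: A replicated system of arity $n$ is $\mathcal P=(Q,T)$ with $Q$ finite and $T\subseteq\bigcup_{k=0}^n Q^{(k)}\times Q^{(k)}$ ($Q^{(k)}$: multisets over $Q$ of size $k$) containing all silent transitions $(\vec x,\vec x)$. For $t=(\vec x,\vec y)$: $\mathrm{pre}(t)=\vec x$, $\mathrm{post}(t)=\vec y$, $\Delta(t)=\vec y-\vec x$. Configurations are $C\in\mathbb N^Q$; $t$ is enabled at $C$ if $C\ge\mathrm{pre}(t)$ (componentwise) and then $C\xrightarrow{t}C+\Delta(t)$. A transition is dead at $C$ if it is disabled at every configuration reachable from $C$ (including $C$). $[\![\mathrm{disa}(U)]\!]$ is the set of configurations at which all transitions of $U$ are disabled; $[\![\mathrm{dead}(U)]\!]$ is the set of configurations at which all transitions of $U$ are dead. *)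

theory Defs
  imports Main "HOL-Library.Multiset"
begin

text \<open>Configurations in N^Q are multisets over the finite state type 'q.
  A transition is a pair (pre, post) of multisets.\<close>

type_synonym 'q trans = "'q multiset \<times> 'q multiset"

definition pre :: "'q trans \<Rightarrow> 'q multiset" where "pre t = fst t"
definition post :: "'q trans \<Rightarrow> 'q multiset" where "post t = snd t"

definition replicated_system :: "nat \<Rightarrow> ('q::finite) trans set \<Rightarrow> bool" where
  "replicated_system n T \<longleftrightarrow>
     (\<forall>t\<in>T. size (pre t) = size (post t) \<and> size (pre t) \<le> n) \<and>
     (\<forall>x::'q multiset. size x \<le> n \<longrightarrow> (x, x) \<in> T)"

definition enabled :: "'q trans \<Rightarrow> 'q multiset \<Rightarrow> bool" where
  "enabled t C \<longleftrightarrow> pre t \<subseteq># C"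

definition step :: "'q trans set \<Rightarrow> 'q multiset \<Rightarrow> 'q multiset \<Rightarrow> bool" where
  "step T C D \<longleftrightarrow> (\<exists>t\<in>T. enabled t C \<and> D = C - pre t + post t)"

definition reach :: "'q trans set \<Rightarrow> 'q multiset \<Rightarrow> 'q multiset \<Rightarrow> bool" where
  "reach T = (step T)\<^sup>*\<^sup>*"

definition dead :: "'q trans set \<Rightarrow> 'q trans \<Rightarrow> 'q multiset \<Rightarrow> bool" where
  "dead T t C \<longleftrightarrow> (\<forall>D. reach T C D \<longrightarrow> \<not> enabled t D)"

definition disa_set :: "'q trans set \<Rightarrow> 'q multiset set" where
  "disa_set U = {C. \<forall>u\<in>U. \<not> enabled u C}"

definition dead_set :: "'q trans set \<Rightarrow> 'q trans set \<Rightarrow> 'q multiset set" where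
  "dead_set T U = {C. \<forall>u\<in>U. dead T u C}"

end

theory Submission
  imports Defs
begin

lemma closed_imp_dead:
  assumes cl: "\<And>C D. C \<in> disa_set U \<Longrightarrow> step T C D \<Longrightarrow> D \<in> disa_set U"
    and C: "C \<in> disa_set U"
  shows "C \<in> dead_set T U"
proof -
  have "\<And>D. reach T C D \<Longrightarrow> D \<in> disa_set U"
  proof -
    fix D assume "reach T C D"
    then show "D \<in> disa_set U" unfolding reach_def
      by (induction rule: rtranclp_induct) (use C cl in auto)
  qed
  then show ?thesis unfolding dead_set_def dead_def disa_set_def by blast
qed

theorem proposition11:
  fixes T U :: "('q::finite) trans set" and n :: nat
  assumes "replicated_system n T"
    and "U \<subseteq> T"
  shows "disa_set U = dead_set T U \<longleftrightarrow>
    (\<forall>t\<in>T. \<forall>u\<in>U. \<exists>u'\<in>U. pre u' \<subseteq># pre t + (pre u - post t))"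
proof
  assume eq: "disa_set U = dead_set T U"
  show "\<forall>t\<in>T. \<forall>u\<in>U. \<exists>u'\<in>U. pre u' \<subseteq># pre t + (pre u - post t)"
  proof (intro ballI, rule ccontr)
    fix t u assume t: "t \<in> T" and u: "u \<in> U"
      and no: "\<not> (\<exists>u'\<in>U. pre u' \<subseteq># pre t + (pre u - post t))"
    define C where "C = pre t + (pre u - post t)"
    have "C \<in> disa_set U" using no unfolding C_def disa_set_def enabled_def by blast
    hence d: "C \<in> dead_set T U" using eq by simp
    have "step T C (C - pre t + post t)"
      unfolding step_def enabled_def C_def using t
      by (intro bexI[of _ t]) (auto simp: add.commute)
    hence r: "reach T C (C - pre t + post t)" unfolding reach_def by auto
    have "C - pre t + post t = (pre u - post t) + post t" unfolding C_def by simp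
    moreover have "pre u \<subseteq># (pre u - post t) + post t"
      using subset_eq_diff_conv[of "pre u" "post t" "pre u - post t"] by simp
    ultimately have "enabled u (C - pre t + post t)" unfolding enabled_def by simp
    with r d u show False unfolding dead_set_def dead_def by blast
  qed
next
  assume H: "\<forall>t\<in>T. \<forall>u\<in>U. \<exists>u'\<in>U. pre u' \<subseteq># pre t + (pre u - post t)"
  have cl: "D \<in> disa_set U" if C: "C \<in> disa_set U" and s: "step T C D" for C D
  proof (rule ccontr)
    assume "D \<notin> disa_set U"
    then obtain u where u: "u \<in> U" and en: "pre u \<subseteq># D"
      unfolding disa_set_def enabled_def by blast
    obtain t where t: "t \<in> T" and et: "pre t \<subseteq># C" and D: "D = C - pre t + post t"
      using s unfolding step_def enabled_def by blast
    obtain u' where u': "u' \<in> U" and le: "pre u' \<subseteq># pre t + (pre u - post t)"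
      using H t u by blast
    have "pre u - post t \<subseteq># C - pre t" using en D by (simp add: subset_eq_diff_conv)
    hence "pre t + (pre u - post t) \<subseteq># pre t + (C - pre t)" by simp
    also have "\<dots> = C" using et by simp
    finally have "pre u' \<subseteq># C" using le by (meson subset_mset.order_trans)
    with C u' show False unfolding disa_set_def enabled_def by blast
  qed
  show "disa_set U = dead_set T U"
  proof
    show "disa_set U \<subseteq> dead_set T U" 
    proof
      fix C assume "C \<in> disa_set U"
      then show "C \<in> dead_set T U" by (rule closed_imp_dead[of U T, rotated]) (rule cl)
    qed
    show "dead_set T U \<subseteq> disa_set U"
      unfolding dead_set_def dead_def disa_set_def reach_def by auto
  qed
qed

end
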